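(* Fix $\bar y\in\mathbb{R}$. Assume Assumption A, that for each $n$ the variables $\{\eta^n_0(x):x\in\mathbb{Z}\}$ are independent, and that $\sup_{n,x}E[\eta^n_0(x)^6]<\infty$. Then there is a finite constant $C$ such that for all $n\in\mathbb{N}$, all $0\le s\le t$ and every integer $1\le k\le 6$, $$\sum_{m\in\mathbb{Z}}E|G_m|^k\le C\big(\sqrt{n(t-s)}+1\big).$$
   Context: Setting. Let $p=\{p(x):x\in\mathbb{Z}\}$ be a probability kernel on $\mathbb{Z}$. Assumption A: for some $\delta>0$, $\sum_{x}e^{\theta x}p(x)<\infty$ for $|\theta|\le\delta$. Set $b=\sum_x xp(x)$. A "random walk" is a continuous-time random walk on $\mathbb{Z}$ that jumps at rate 1 with increments distributed according to $p$. For each $n$ nonnegative integer initial occupation variables $\eta^n_0(m)$, $m\in\mathbb{Z}$, are given with $\rho^n_0(m)=E\eta^n_0(m)$; the $\eta^n_0(m)$ particles initially at $m$ move as independent random walks $X^n_{m,j}(\cdot)$, $1\le j\le\eta^n_0(m)$ (with $X^n_{m,j}(0)=m$), independent of the initial occupation variables. $[\cdot]$ denotes the integer part. For fixed $n$ and $0\le s\le t$ define the events $A_{m,j}=\{X^n_{m,j}(ns)>[n\bar y]+[nbs],\ X^n_{m,j}(nt)\le[n\bar y]+[nbt]\}$, $B_{m,j}=\{X^n_{m,j}(ns)\le[n\bar y]+[nbs],\ X^n_{m,j}(nt)>[n\bar y]+[nbt]\}$, and $G_m=\sum_{j=1}^{\eta^n_0(m)}(\mathbf 1_{A_{m,j}}-\mathbf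 1_{B_{m,j}})-\rho^n_0(m)\big(P(A_{m,1})-P(B_{m,1})\big)$, where $P(A_{m,1}),P(B_{m,1})$ denote the probabilities for a random walk started at $m$. *)

theory Defs
  imports "HOL-Probability.Probability"
begin

fun conv_pow :: "(int \<Rightarrow> real) \<Rightarrow> nat \<Rightarrow> int \<Rightarrow> real" where
  "conv_pow p 0 = (\<lambda>x. if x = 0 then 1 else 0)"
| "conv_pow p (Suc k) = (\<lambda>x. \<Sum>\<^sub>\<infinity>y. p y * conv_pow p k (x - y))"

text \<open>Transition probabilities of the rate-1 continuous-time random walk with
  jump distribution p: probability of displacement x in time u.\<close>
definition ctrw_kernel :: "(int \<Rightarrow> real) \<Rightarrow> real \<Rightarrow> int \<Rightarrow> real" where
  "ctrw_kernel p u x = (\<Sum>k. exp (- u) * u ^ k / fact k * conv_pow p k x)"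

definition prob_kernel :: "(int \<Rightarrow> real) \<Rightarrow> bool" where
  "prob_kernel p \<longleftrightarrow> (\<forall>x. 0 \<le> p x) \<and> (p has_sum 1) UNIV"

definition ctrw :: "'a measure \<Rightarrow> (int \<Rightarrow> real) \<Rightarrow> int \<Rightarrow> ('a \<Rightarrow> real \<Rightarrow> int) \<Rightarrow> bool" where
  "ctrw M p x0 X \<longleftrightarrow>
     X \<in> M \<rightarrow>\<^sub>M (\<Pi>\<^sub>M t\<in>UNIV. count_space UNIV) \<and>
     (AE \<omega> in M. X \<omega> 0 = x0) \<and>
     (\<forall>ts :: real list. sorted ts \<and> (\<forall>t\<in>set ts. 0 \<le> t) \<longrightarrow>
        prob_space.indep_vars M (\<lambda>_. count_space UNIV)
          (\<lambda>i \<omega>. X \<omega> (ts ! Suc i) - X \<omega> (ts ! i)) {..<length ts - 1}) \<and>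
     (\<forall>s t x. 0 \<le> s \<and> s \<le> t \<longrightarrow>
        measure M {\<omega> \<in> space M. X \<omega> t - X \<omega> s = x} = ctrw_kernel p (t - s) x)"

definition evA :: "'a measure \<Rightarrow> ('a \<Rightarrow> real \<Rightarrow> int) \<Rightarrow> nat \<Rightarrow> real \<Rightarrow> real \<Rightarrow> real \<Rightarrow> real \<Rightarrow> 'a set" where
  "evA M Z n ybar b s t = {\<omega> \<in> space M.
      Z \<omega> (real n * s) > \<lfloor>real n * ybar\<rfloor> + \<lfloor>real n * b * s\<rfloor> \<and>
      Z \<omega> (real n * t) \<le> \<lfloor>real n * ybar\<rfloor> + \<lfloor>real n * b * t\<rfloor>}"

definition evB :: "'a measure \<Rightarrow> ('a \<Rightarrow> real \<Rightarrow> int) \<Rightarrow> nat \<Rightarrow> real \<Rightarrow> real \<Rightarrow> real \<Rightarrow> real \<Rightarrow> 'a set" where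
  "evB M Z n ybar b s t = {\<omega> \<in> space M.
      Z \<omega> (real n * s) \<le> \<lfloor>real n * ybar\<rfloor> + \<lfloor>real n * b * s\<rfloor> \<and>
      Z \<omega> (real n * t) > \<lfloor>real n * ybar\<rfloor> + \<lfloor>real n * b * t\<rfloor>}"

text \<open>G_m for fixed n: eta0 = occupation variable at m, W j = walk of the j-th particle at m.\<close>
definition Gm :: "'a measure \<Rightarrow> ('a \<Rightarrow> nat) \<Rightarrow> (nat \<Rightarrow> 'a \<Rightarrow> real \<Rightarrow> int) \<Rightarrow> nat \<Rightarrow> real \<Rightarrow> real \<Rightarrow> real \<Rightarrow> real \<Rightarrow> 'a \<Rightarrow> real" where
  "Gm M eta0 W n ybar b s t \<omega> =
     (\<Sum>j = 1..eta0 \<omega>. indicator (evA M (W j) n ybar b s t) \<omega>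
                       - indicator (evB M (W j) n ybar b s t) \<omega>)
     - (\<integral>\<omega>'. real (eta0 \<omega>') \<partial>M) *
       (measure M (evA M (W 1) n ybar b s t) - measure M (evB M (W 1) n ybar b s t))"

end

theory Submission
  imports Defs
begin

lemma nn_integral_has_sum:
  fixes f :: "'a \<Rightarrow> real"
  assumes f0: "\<And>x. 0 \<le> f x" and hs: "(f has_sum a) UNIV"
  shows "(\<integral>\<^sup>+x. ennreal (f x) \<partial>count_space UNIV) = ennreal a"
proof -
  have e: "(\<lambda>x. \<bar>f x\<bar>) = f" using f0 by auto
  have "f summable_on UNIV" using hs by (auto simp: summable_on_def)
  then have "(\<lambda>x. norm (f x)) summable_on UNIV" unfolding real_norm_def e .
  then have ab: "Infinite_Set_Sum.abs_summable_on f UNIV" using abs_summable_equivalent[of f UNIV] by simp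
  have "(\<integral>\<^sup>+x. ennreal (f x) \<partial>count_space UNIV) = ennreal (infsetsum f UNIV)"
    using nn_integral_conv_infsetsum[OF ab] f0 by simp
  also have "infsetsum f UNIV = infsum f UNIV" using infsetsum_infsum[OF ab] .
  also have "\<dots> = a" using hs by (rule infsumI)
  finally show ?thesis .
qed

lemma infsum_ennreal_int:
  fixes g :: "int \<Rightarrow> ennreal"
  shows "infsum g UNIV = (\<integral>\<^sup>+x. g x \<partial>count_space UNIV)"
proof -
  have inc: "incseq (\<lambda>N::nat. \<lambda>x. g x * indicator {- int N..int N} x)"
    by (intro incseq_SucI le_funI) (auto simp: indicator_def)
  have "(\<integral>\<^sup>+x. g x \<partial>count_space UNIV) = (\<integral>\<^sup>+x. (SUP N. g x * indicator {- int N..int N} x) \<partial>count_space UNIV)"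
  proof (intro nn_integral_cong)
    fix x :: int
    have "(SUP N. g x * indicator {- int N..int N} x) = g x"
    proof (rule antisym)
      show "(SUP N. g x * indicator {- int N..int N} x) \<le> g x"
        by (intro SUP_least) (auto simp: indicator_def)
      have "g x = g x * indicator {- int (nat \<bar>x\<bar>)..int (nat \<bar>x\<bar>)} x" by (auto simp: indicator_def)
      also have "\<dots> \<le> (SUP N. g x * indicator {- int N..int N} x)" by (rule SUP_upper) auto
      finally show "g x \<le> (SUP N. g x * indicator {- int N..int N} x)" .
    qed
    then show "g x = (SUP N. g x * indicator {- int N..int N} x)" by simp
  qed
  also have "\<dots> = (SUP N. (\<integral>\<^sup>+x. g x * indicator {- int N..int N} x \<partial>count_space UNIV))"
    by (rule nn_integral_monotone_convergence_SUP) (use inc in auto)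
  also have "\<dots> = (SUP N. sum g {- int N..int N})"
    by (simp add: nn_integral_count_space_indicator[symmetric] nn_integral_count_space_finite)
  also have "\<dots> = (SUP F\<in>{F. finite F \<and> F \<subseteq> UNIV}. sum g F)"
  proof (rule antisym)
    show "(SUP N. sum g {- int N..int N}) \<le> (SUP F\<in>{F. finite F \<and> F \<subseteq> UNIV}. sum g F)"
      by (intro SUP_least SUP_upper) auto
    show "(SUP F\<in>{F. finite F \<and> F \<subseteq> UNIV}. sum g F) \<le> (SUP N. sum g {- int N..int N})"
    proof (intro SUP_least)
      fix F :: "int set" assume "F \<in> {F. finite F \<and> F \<subseteq> UNIV}"
      then have fin: "finite F" by auto
      define N where "N = nat (Max (insert 0 (abs ` F)))"
      have "F \<subseteq> {- int N..int N}"
      proof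
        fix x assume "x \<in> F"
        then have "\<bar>x\<bar> \<le> Max (insert 0 (abs ` F))" using fin by (intro Max_ge) auto
        then show "x \<in> {- int N..int N}" by (auto simp: N_def)
      qed
      then have "sum g F \<le> sum g {- int N..int N}" by (intro sum_mono2) auto
      also have "\<dots> \<le> (SUP N. sum g {- int N..int N})" by (rule SUP_upper) auto
      finally show "sum g F \<le> (SUP N. sum g {- int N..int N})" .
    qed
  qed
  also have "\<dots> = infsum g UNIV" by (rule nonneg_infsum_complete[symmetric]) auto
  finally show ?thesis ..
qed


lemma nn_swap_count:
  fixes f :: "'a::countable \<Rightarrow> 'b::countable \<Rightarrow> ennreal"
  shows "(\<integral>\<^sup>+x. \<integral>\<^sup>+y. f x y \<partial>count_space UNIV \<partial>count_space UNIV) =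
         (\<integral>\<^sup>+y. \<integral>\<^sup>+x. f x y \<partial>count_space UNIV \<partial>count_space UNIV)"
  using nn_integral_count_space_nn_integral[of "UNIV::'b set" "\<lambda>y x. f x y" "count_space UNIV"]
  by simp

lemma nn_shift_int:
  fixes f :: "int \<Rightarrow> ennreal"
  shows "(\<integral>\<^sup>+x. f (x - y) \<partial>count_space UNIV) = (\<integral>\<^sup>+x. f x \<partial>count_space UNIV)"
proof -
  have "bij_betw (\<lambda>x. x - y) UNIV UNIV"
    by (rule bij_betwI[of _ _ _ "\<lambda>x. x + y"]) auto
  from nn_integral_bij_count_space[OF this, of f] show ?thesis .
qed

lemma nn_single_le:
  fixes f :: "'a \<Rightarrow> ennreal"
  shows "f x \<le> (\<integral>\<^sup>+z. f z \<partial>count_space UNIV)"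
proof -
  have "f x = (\<integral>\<^sup>+z. f z * indicator {x} z \<partial>count_space UNIV)"
    by simp
  also have "\<dots> \<le> (\<integral>\<^sup>+z. f z \<partial>count_space UNIV)"
    by (intro nn_integral_mono) (auto simp: indicator_def)
  finally show ?thesis .
qed

lemma nn_point: "(\<integral>\<^sup>+x. (if x = a then c else 0) \<partial>count_space UNIV) = (c::ennreal)"
  by (subst nn_integral_count_space'[of "{a}"]) auto

locale kern =
  fixes p :: "int \<Rightarrow> real" and \<delta> :: real
  assumes p0: "\<And>x. 0 \<le> p x" and p1: "(p has_sum 1) UNIV" and dpos: "\<delta> > 0"
    and ex: "\<forall>\<theta>. \<bar>\<theta>\<bar> \<le> \<delta> \<longrightarrow> (\<lambda>x. exp (\<theta> * real_of_int x) * p x) summable_on UNIV"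
begin

lemma sq_summable: "(\<lambda>x. real_of_int x ^ 2 * p x) summable_on UNIV"
proof -
  have s1: "(\<lambda>x. exp (\<delta> * real_of_int x) * p x) summable_on UNIV" using ex dpos by auto
  have s2: "(\<lambda>x. exp ((-\<delta>) * real_of_int x) * p x) summable_on UNIV" using ex[rule_format, of "-\<delta>"] dpos by simp
  have s: "(\<lambda>x. (2 / \<delta>^2) * (exp (\<delta> * real_of_int x) * p x + exp ((-\<delta>) * real_of_int x) * p x)) summable_on UNIV"
    by (intro summable_on_cmult_right summable_on_add s1 s2)
  show ?thesis
  proof (rule summable_on_comparison_test[OF s])
    fix x :: int
    show "0 \<le> real_of_int x ^ 2 * p x" using p0[of x] by simp
    define y where "y = \<delta> * \<bar>real_of_int x\<bar>"
    have y0: "0 \<le> y" using dpos by (simp add: y_def)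
    have "y^2 / 2 \<le> exp y" using exp_lower_Taylor_quadratic[OF y0] y0 by linarith
    also have "exp y \<le> exp (\<delta> * real_of_int x) + exp ((-\<delta>) * real_of_int x)"
      by (cases "x \<ge> 0") (auto simp: y_def abs_if add_increasing add_increasing2)
    finally have "\<delta>^2 * real_of_int x ^ 2 \<le> 2 * (exp (\<delta> * real_of_int x) + exp ((-\<delta>) * real_of_int x))"
      by (simp add: y_def power_mult_distrib)
    then have "real_of_int x ^ 2 \<le> (2 / \<delta>^2) * (exp (\<delta> * real_of_int x) + exp ((-\<delta>) * real_of_int x))"
      using dpos by (simp add: field_simps)
    then show "real_of_int x ^ 2 * p x \<le> (2 / \<delta>^2) * (exp (\<delta> * real_of_int x) * p x + exp ((-\<delta>) * real_of_int x) * p x)"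
      using p0[of x] by (metis distrib_right mult.assoc mult_right_mono)
  qed
qed

lemma lin_summable: "(\<lambda>x. real_of_int x * p x) summable_on UNIV"
proof -
  have p1s: "p summable_on UNIV" using p1 by (auto simp: summable_on_def)
  have "(\<lambda>x. real_of_int x ^ 2 * p x + p x) summable_on UNIV"
    by (intro summable_on_add sq_summable p1s)
  then have "(\<lambda>x. norm (real_of_int x * p x)) summable_on UNIV"
  proof (rule Infinite_Sum.abs_summable_on_comparison_test')
    fix x :: int
    have "\<bar>real_of_int x\<bar> \<le> real_of_int x ^ 2 + 1"
    proof (cases "\<bar>real_of_int x\<bar> \<le> 1")
      case True
      then show ?thesis by (simp add: add_increasing)
    next
      case False
      then have "\<bar>real_of_int x\<bar> * 1 \<le> \<bar>real_of_int x\<bar> * \<bar>real_of_int x\<bar>"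
        by (intro mult_left_mono) auto
      then show ?thesis by (simp add: power2_eq_square)
    qed
    then show "norm (real_of_int x * p x) \<le> real_of_int x ^ 2 * p x + p x"
      using p0[of x] by (simp add: abs_mult) (metis distrib_right mult_1 mult_right_mono)
  qed
  then show ?thesis by (rule abs_summable_summable)
qed

definition "bb = (\<Sum>\<^sub>\<infinity>x. real_of_int x * p x)"
definition "s2 = (\<Sum>\<^sub>\<infinity>x. real_of_int x ^ 2 * p x)"
definition "tau = s2 - bb^2"

lemma quad_has_sum: "((\<lambda>y. p y * (real_of_int y + c)^2) has_sum (s2 + 2 * c * bb + c^2)) UNIV"
proof -
  have h1: "((\<lambda>x. real_of_int x ^ 2 * p x) has_sum s2) UNIV"
    unfolding s2_def using sq_summable by (rule has_sum_infsum)
  have h2: "((\<lambda>x. real_of_int x * p x) has_sum bb) UNIV"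
    unfolding bb_def using lin_summable by (rule has_sum_infsum)
  have "((\<lambda>y. real_of_int y ^ 2 * p y + (2 * c) * (real_of_int y * p y) + c^2 * p y) has_sum
          (s2 + (2 * c) * bb + c^2 * 1)) UNIV"
    by (intro has_sum_add has_sum_cmult_right h1 h2 p1)
  moreover have "(\<lambda>y. p y * (real_of_int y + c)^2) = (\<lambda>y. real_of_int y ^ 2 * p y + (2 * c) * (real_of_int y * p y) + c^2 * p y)"
    by (simp add: fun_eq_iff power2_eq_square algebra_simps)
  ultimately show ?thesis by simp
qed

lemma tau_nonneg: "0 \<le> tau"
proof -
  have "0 \<le> s2 + 2 * (- bb) * bb + (- bb)^2"
    using quad_has_sum[of "- bb"] by (rule has_sum_nonneg) (use p0 in simp)
  then show ?thesis by (simp add: tau_def power2_eq_square)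
qed

lemma p1s: "p summable_on UNIV" using p1 by (auto simp: summable_on_def)

lemma conv_props:
  "(\<forall>x. 0 \<le> conv_pow p k x) \<and>
   (\<integral>\<^sup>+x. ennreal (conv_pow p k x) \<partial>count_space UNIV) = 1 \<and>
   (\<forall>v. (\<integral>\<^sup>+x. ennreal (conv_pow p k x * (real_of_int x - v)^2) \<partial>count_space UNIV)
        = ennreal (real k * tau + (real k * bb - v)^2))"
proof (induction k)
  case 0
  have nn: "\<forall>x. 0 \<le> conv_pow p 0 x" by simp
  have "(\<integral>\<^sup>+x. ennreal (conv_pow p 0 x) \<partial>count_space UNIV) = (\<integral>\<^sup>+x. (if x = (0::int) then 1 else 0) \<partial>count_space UNIV)"
    by (intro nn_integral_cong) auto
  also have "\<dots> = 1" by (rule nn_point)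
  finally have one: "(\<integral>\<^sup>+x. ennreal (conv_pow p 0 x) \<partial>count_space UNIV) = 1" .
  have mom: "(\<integral>\<^sup>+x. ennreal (conv_pow p 0 x * (real_of_int x - v)^2) \<partial>count_space UNIV)
        = ennreal (real 0 * tau + (real 0 * bb - v)^2)" for v
  proof -
    have "(\<integral>\<^sup>+x. ennreal (conv_pow p 0 x * (real_of_int x - v)^2) \<partial>count_space UNIV)
        = (\<integral>\<^sup>+x. (if x = (0::int) then ennreal (v^2) else 0) \<partial>count_space UNIV)"
      by (intro nn_integral_cong) auto
    also have "\<dots> = ennreal (v^2)" by (rule nn_point)
    finally show ?thesis by simp
  qed
  show ?case using nn one mom by blast
next
  case (Suc k)
  let ?c = "conv_pow p k"
  let ?c' = "conv_pow p (Suc k)"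
  from Suc.IH have nn: "\<And>x. 0 \<le> ?c x"
    and one: "(\<integral>\<^sup>+x. ennreal (?c x) \<partial>count_space UNIV) = 1"
    and mom: "\<And>v. (\<integral>\<^sup>+x. ennreal (?c x * (real_of_int x - v)^2) \<partial>count_space UNIV)
        = ennreal (real k * tau + (real k * bb - v)^2)" by auto
  have le1: "?c x \<le> 1" for x
  proof -
    have "ennreal (?c x) \<le> 1" using nn_single_le[of "\<lambda>x. ennreal (?c x)" x] one by simp
    then show "?c x \<le> 1" using nn[of x] by simp
  qed
  have hs: "((\<lambda>y. p y * ?c (x - y)) has_sum ?c' x) UNIV" for x
  proof -
    have "(\<lambda>y. p y * ?c (x - y)) summable_on UNIV"
      by (rule summable_on_comparison_test[OF p1s]) (use p0 nn le1 in \<open>auto intro: mult_left_le\<close>)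
    then show ?thesis by (simp add: has_sum_infsum)
  qed
  have nn': "0 \<le> ?c' x" for x
    using hs[of x] by (rule has_sum_nonneg) (simp add: p0 nn)
  have en: "ennreal (?c' x) = (\<integral>\<^sup>+ y. ennreal (p y * ?c (x-y)) \<partial>count_space UNIV)" for x
    using nn_integral_has_sum[OF _ hs[of x]] p0 nn by simp
  have "(\<integral>\<^sup>+x. ennreal (?c' x) \<partial>count_space UNIV)
      = (\<integral>\<^sup>+x. \<integral>\<^sup>+y. ennreal (p y * ?c (x-y)) \<partial>count_space UNIV \<partial>count_space UNIV)"
    by (simp only: en)
  also have "\<dots> = (\<integral>\<^sup>+y. \<integral>\<^sup>+x. ennreal (p y * ?c (x-y)) \<partial>count_space UNIV \<partial>count_space UNIV)"
    by (rule nn_swap_count)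
  also have "\<dots> = (\<integral>\<^sup>+y. ennreal (p y) * (\<integral>\<^sup>+x. ennreal (?c (x-y)) \<partial>count_space UNIV) \<partial>count_space UNIV)"
    by (intro nn_integral_cong) (simp add: ennreal_mult p0 nn nn_integral_cmult)
  also have "\<dots> = (\<integral>\<^sup>+y. ennreal (p y) \<partial>count_space UNIV)"
    using nn_shift_int[of "\<lambda>z. ennreal (?c z)"] one by simp
  also have "\<dots> = 1" using nn_integral_has_sum[OF p0 p1] by simp
  finally have one': "(\<integral>\<^sup>+x. ennreal (?c' x) \<partial>count_space UNIV) = 1" .
  have mom': "(\<integral>\<^sup>+x. ennreal (?c' x * (real_of_int x - v)^2) \<partial>count_space UNIV)
        = ennreal (real (Suc k) * tau + (real (Suc k) * bb - v)^2)" for v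
  proof -
    have "(\<integral>\<^sup>+x. ennreal (?c' x * (real_of_int x - v)^2) \<partial>count_space UNIV)
        = (\<integral>\<^sup>+x. ennreal (?c' x) * ennreal ((real_of_int x - v)^2) \<partial>count_space UNIV)"
      by (intro nn_integral_cong) (simp only: ennreal_mult[OF nn' zero_le_power2])
    also have "\<dots> = (\<integral>\<^sup>+x. (\<integral>\<^sup>+ y. ennreal (p y * ?c (x-y)) \<partial>count_space UNIV) * ennreal ((real_of_int x - v)^2) \<partial>count_space UNIV)"
      by (simp only: en)
    also have "\<dots> = (\<integral>\<^sup>+x. \<integral>\<^sup>+ y. ennreal (p y * ?c (x-y)) * ennreal ((real_of_int x - v)^2) \<partial>count_space UNIV \<partial>count_space UNIV)"
      by (intro nn_integral_cong) (simp add: nn_integral_multc)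
    also have "\<dots> = (\<integral>\<^sup>+y. \<integral>\<^sup>+ x. ennreal (p y * ?c (x-y)) * ennreal ((real_of_int x - v)^2) \<partial>count_space UNIV \<partial>count_space UNIV)"
      by (rule nn_swap_count)
    also have "\<dots> = (\<integral>\<^sup>+y. ennreal (p y) * (\<integral>\<^sup>+ x. ennreal (?c (x-y) * (real_of_int (x - y) - (v - real_of_int y))^2) \<partial>count_space UNIV) \<partial>count_space UNIV)"
      by (intro nn_integral_cong) (simp add: ennreal_mult[symmetric] p0 nn nn_integral_cmult[symmetric] mult.assoc algebra_simps)
    also have "\<dots> = (\<integral>\<^sup>+y. ennreal (p y) * ennreal (real k * tau + (real k * bb - (v - real_of_int y))^2) \<partial>count_space UNIV)"
    proof (intro nn_integral_cong)
      fix y :: int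
      show "ennreal (p y) * (\<integral>\<^sup>+ x. ennreal (?c (x-y) * (real_of_int (x - y) - (v - real_of_int y))^2) \<partial>count_space UNIV)
         = ennreal (p y) * ennreal (real k * tau + (real k * bb - (v - real_of_int y))^2)"
        using nn_shift_int[of "\<lambda>z. ennreal (?c z * (real_of_int z - (v - real_of_int y))^2)" y] mom[of "v - real_of_int y"]
        by simp
    qed
    also have "\<dots> = (\<integral>\<^sup>+y. ennreal (p y * (real k * tau + (real_of_int y + (real k * bb - v))^2)) \<partial>count_space UNIV)"
      by (intro nn_integral_cong) (simp add: ennreal_mult p0 tau_nonneg algebra_simps)
    also have "\<dots> = ennreal (real (Suc k) * tau + (real (Suc k) * bb - v)^2)"
    proof -
      have "((\<lambda>y. (real k * tau) * p y + p y * (real_of_int y + (real k * bb - v))^2) has_sum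
             ((real k * tau) * 1 + (s2 + 2 * (real k * bb - v) * bb + (real k * bb - v)^2))) UNIV"
        by (intro has_sum_add has_sum_cmult_right p1 quad_has_sum)
      moreover have "(\<lambda>y. (real k * tau) * p y + p y * (real_of_int y + (real k * bb - v))^2)
          = (\<lambda>y. p y * (real k * tau + (real_of_int y + (real k * bb - v))^2))"
        by (simp add: fun_eq_iff algebra_simps)
      moreover have "(real k * tau) * 1 + (s2 + 2 * (real k * bb - v) * bb + (real k * bb - v)^2)
          = real (Suc k) * tau + (real (Suc k) * bb - v)^2"
        by (simp add: tau_def power2_eq_square algebra_simps)
      ultimately have "((\<lambda>y. p y * (real k * tau + (real_of_int y + (real k * bb - v))^2)) has_sum
             (real (Suc k) * tau + (real (Suc k) * bb - v)^2)) UNIV" by simp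
      then show ?thesis
        by (rule nn_integral_has_sum[rotated]) (simp add: p0 tau_nonneg)
    qed
    finally show ?thesis .
  qed
  show ?case using nn' one' mom' by blast
qed

lemma conv_nn: "0 \<le> conv_pow p k x" using conv_props by blast

lemma conv_le1: "conv_pow p k x \<le> 1"
proof -
  have one: "(\<integral>\<^sup>+x. ennreal (conv_pow p k x) \<partial>count_space UNIV) = 1" using conv_props by blast
  have "ennreal (conv_pow p k x) \<le> 1" using nn_single_le[of "\<lambda>x. ennreal (conv_pow p k x)" x] one by simp
  then show ?thesis using conv_nn[of k x] by simp
qed

definition wt :: "real \<Rightarrow> nat \<Rightarrow> real" where "wt u k = exp (- u) * u ^ k / fact k"

lemma wt_nn: assumes "0 \<le> u" shows "0 \<le> wt u k"
  unfolding wt_def by (intro divide_nonneg_nonneg mult_nonneg_nonneg zero_le_power assms) auto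

lemma poisson0: "(\<lambda>k. wt u k) sums 1"
proof -
  have "(\<lambda>n. exp (- u) * (u^n /\<^sub>R fact n)) sums (exp (- u) * exp u)"
    by (intro sums_mult exp_converges)
  moreover have "(\<lambda>n. exp (- u) * (u^n /\<^sub>R fact n)) = wt u"
    by (simp add: fun_eq_iff wt_def scaleR_conv_of_real divide_inverse mult_ac)
  ultimately show ?thesis by (simp add: exp_minus field_simps)
qed

lemma wt_Suc: "wt u (Suc k) * real (Suc k) = u * wt u k"
proof -
  have n: "real (Suc k) \<noteq> 0" by simp
  have f: "fact (Suc k) = real (Suc k) * (fact k :: real)" by (simp only: fact_Suc)
  show ?thesis unfolding wt_def f using n by (simp add: field_simps del: of_nat_Suc)
qed

lemma poisson1: "(\<lambda>k. wt u k * real k) sums u"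
proof -
  have "(\<lambda>k. u * wt u k) sums (u * 1)" by (intro sums_mult poisson0)
  then have "(\<lambda>k. wt u (Suc k) * real (Suc k)) sums u" by (simp only: wt_Suc) simp
  then show ?thesis by (subst (asm) sums_Suc_iff) simp
qed

lemma poisson2: "(\<lambda>k. wt u k * real k ^ 2) sums (u^2 + u)"
proof -
  have "(\<lambda>k. u * (wt u k * real k + wt u k)) sums (u * (u + 1))"
    by (intro sums_mult sums_add poisson0 poisson1)
  moreover have "(\<lambda>k. u * (wt u k * real k + wt u k)) = (\<lambda>k. wt u (Suc k) * real (Suc k) ^ 2)"
  proof
    fix k
    have "wt u (Suc k) * real (Suc k) ^ 2 = (wt u (Suc k) * real (Suc k)) * real (Suc k)"
      by (simp add: power2_eq_square)
    also have "\<dots> = u * (wt u k * real k + wt u k)" by (simp only: wt_Suc) (simp add: algebra_simps)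
    finally show "u * (wt u k * real k + wt u k) = wt u (Suc k) * real (Suc k) ^ 2" by simp
  qed
  ultimately have "(\<lambda>k. wt u (Suc k) * real (Suc k) ^ 2) sums (u^2 + u)"
    by (simp add: power2_eq_square algebra_simps)
  then show ?thesis by (subst (asm) sums_Suc_iff) simp
qed

lemma ctrw_kernel_wt: "ctrw_kernel p u x = (\<Sum>k. wt u k * conv_pow p k x)"
  by (simp add: ctrw_kernel_def wt_def)

lemma kernel_summable: assumes u: "0 \<le> u" shows "summable (\<lambda>k. wt u k * conv_pow p k x)"
proof (rule summable_comparison_test'[where g = "wt u" and N = 0])
  show "summable (wt u)" using poisson0[of u] by (simp add: sums_iff)
  fix n :: nat
  have a: "0 \<le> wt u n" using wt_nn[OF u] .
  have b: "0 \<le> conv_pow p n x" "conv_pow p n x \<le> 1" using conv_nn conv_le1 by auto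
  show "norm (wt u n * conv_pow p n x) \<le> wt u n"
    using a b by (simp add: abs_of_nonneg mult_left_le)
qed

lemma kernel_nn: assumes u: "0 \<le> u" shows "0 \<le> ctrw_kernel p u x"
  unfolding ctrw_kernel_wt
  by (intro suminf_nonneg kernel_summable u mult_nonneg_nonneg wt_nn conv_nn)

lemma kernel_mix:
  fixes q :: "int \<Rightarrow> real" and G :: "nat \<Rightarrow> real"
  assumes u: "0 \<le> u" and q0: "\<And>x. 0 \<le> q x" and G0: "\<And>k. 0 \<le> G k"
    and hG: "\<And>k. (\<integral>\<^sup>+x. ennreal (conv_pow p k x * q x) \<partial>count_space UNIV) = ennreal (G k)"
    and sG: "(\<lambda>k. wt u k * G k) sums S"
  shows "(\<integral>\<^sup>+x. ennreal (ctrw_kernel p u x * q x) \<partial>count_space UNIV) = ennreal S"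
proof -
  have e1: "ennreal (ctrw_kernel p u x * q x) = (\<Sum>k. ennreal (wt u k * (conv_pow p k x * q x)))" for x
  proof -
    have "ctrw_kernel p u x * q x = (\<Sum>k. wt u k * conv_pow p k x * q x)"
      unfolding ctrw_kernel_wt by (rule suminf_mult2[OF kernel_summable[OF u]])
    also have "\<dots> = (\<Sum>k. wt u k * (conv_pow p k x * q x))" by (simp add: mult.assoc)
    finally have "ennreal (ctrw_kernel p u x * q x) = ennreal (\<Sum>k. wt u k * (conv_pow p k x * q x))" by simp
    also have "\<dots> = (\<Sum>k. ennreal (wt u k * (conv_pow p k x * q x)))"
      using summable_mult2[OF kernel_summable[OF u], of x "q x"]
      by (intro suminf_ennreal2[symmetric]) (auto simp: mult.assoc intro!: mult_nonneg_nonneg wt_nn u conv_nn q0)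
    finally show ?thesis .
  qed
  have "(\<integral>\<^sup>+x. ennreal (ctrw_kernel p u x * q x) \<partial>count_space UNIV)
      = (\<integral>\<^sup>+x. (\<Sum>k. ennreal (wt u k * (conv_pow p k x * q x))) \<partial>count_space UNIV)"
    by (simp only: e1)
  also have "\<dots> = (\<Sum>k. (\<integral>\<^sup>+x. ennreal (wt u k * (conv_pow p k x * q x)) \<partial>count_space UNIV))"
    by (rule nn_integral_suminf) simp
  also have "\<dots> = (\<Sum>k. ennreal (wt u k * G k))"
  proof (intro suminf_cong)
    fix k
    have "(\<integral>\<^sup>+x. ennreal (wt u k * (conv_pow p k x * q x)) \<partial>count_space UNIV)
        = (\<integral>\<^sup>+x. ennreal (wt u k) * ennreal (conv_pow p k x * q x) \<partial>count_space UNIV)"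
      by (intro nn_integral_cong ennreal_mult wt_nn u mult_nonneg_nonneg conv_nn q0)
    also have "\<dots> = ennreal (wt u k) * ennreal (G k)" by (simp add: nn_integral_cmult hG)
    also have "\<dots> = ennreal (wt u k * G k)" by (simp add: ennreal_mult wt_nn u G0)
    finally show "(\<integral>\<^sup>+x. ennreal (wt u k * (conv_pow p k x * q x)) \<partial>count_space UNIV) = ennreal (wt u k * G k)" .
  qed
  also have "\<dots> = ennreal S"
    using sG by (subst suminf_ennreal2) (auto simp: sums_iff intro!: mult_nonneg_nonneg wt_nn u G0)
  finally show ?thesis .
qed

lemma kernel_one: assumes u: "0 \<le> u" shows "(\<integral>\<^sup>+x. ennreal (ctrw_kernel p u x) \<partial>count_space UNIV) = 1"
proof -
  have h: "(\<integral>\<^sup>+x. ennreal (conv_pow p k x * 1) \<partial>count_space UNIV) = ennreal 1" for k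
    using conv_props by simp
  have "(\<lambda>k. wt u k * 1) sums 1" using poisson0 by simp
  from kernel_mix[OF u _ _ h this] show ?thesis by simp
qed

lemma kernel_var: assumes u: "0 \<le> u"
  shows "(\<integral>\<^sup>+x. ennreal (ctrw_kernel p u x * (real_of_int x - u * bb)^2) \<partial>count_space UNIV) = ennreal (u * s2)"
proof (rule kernel_mix[OF u])
  show "(\<integral>\<^sup>+x. ennreal (conv_pow p k x * (real_of_int x - u * bb)^2) \<partial>count_space UNIV)
        = ennreal (real k * tau + (real k * bb - u * bb)^2)" for k
    using conv_props by blast
  show "0 \<le> real k * tau + (real k * bb - u * bb)^2" for k using tau_nonneg by simp
  have "(\<lambda>k. tau * (wt u k * real k) + bb^2 * (wt u k * real k ^ 2) - (2 * u * bb^2) * (wt u k * real k) + (u^2 * bb^2) * wt u k)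
        sums (tau * u + bb^2 * (u^2 + u) - (2 * u * bb^2) * u + (u^2 * bb^2) * 1)"
    by (intro sums_add sums_diff sums_mult poisson0 poisson1 poisson2)
  moreover have "(\<lambda>k. tau * (wt u k * real k) + bb^2 * (wt u k * real k ^ 2) - (2 * u * bb^2) * (wt u k * real k) + (u^2 * bb^2) * wt u k)
      = (\<lambda>k. wt u k * (real k * tau + (real k * bb - u * bb)^2))"
    by (simp add: fun_eq_iff power2_eq_square algebra_simps)
  moreover have "tau * u + bb^2 * (u^2 + u) - (2 * u * bb^2) * u + (u^2 * bb^2) * 1 = u * s2"
    by (simp add: tau_def power2_eq_square algebra_simps)
  ultimately show "(\<lambda>k. wt u k * (real k * tau + (real k * bb - u * bb)^2)) sums (u * s2)" by simp
qed simp

lemma s2_nonneg: "0 \<le> s2" using tau_nonneg zero_le_power2[of bb] unfolding tau_def by linarith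

lemma abs_bound:
  fixes D :: int
  assumes u: "0 \<le> u" and hD: "\<bar>real_of_int D - u * bb\<bar> \<le> 1"
  shows "(\<integral>\<^sup>+d. ennreal (ctrw_kernel p u d * \<bar>real_of_int d - real_of_int D\<bar>) \<partial>count_space UNIV)
         \<le> ennreal ((s2 + 2) * (sqrt u + 1))"
proof -
  define r where "r = sqrt u + 1"
  have r1: "1 \<le> r" using u by (simp add: r_def)
  have ur: "u \<le> r^2"
  proof -
    have "u = (sqrt u)^2" using u by simp
    also have "\<dots> \<le> r^2" unfolding r_def using u by (intro power_mono) auto
    finally show ?thesis .
  qed
  have pt: "\<bar>y\<bar> \<le> (y - e)^2 / r + 1 / r + r / 2" if "\<bar>e\<bar> \<le> 1" for y e :: real
  proof -
    have "0 \<le> (\<bar>y\<bar> - r)^2" by simp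
    then have "2 * r * \<bar>y\<bar> \<le> y^2 + r^2" by (simp add: power2_eq_square algebra_simps)
    moreover have "y^2 \<le> 2 * (y - e)^2 + 2 * e^2"
      using zero_le_power2[of "y - 2 * e"] by (simp add: power2_eq_square algebra_simps)
    moreover have "e^2 \<le> 1"
    proof -
      have "\<bar>e\<bar>^2 \<le> 1^2" using that by (intro power_mono) auto
      then show ?thesis by simp
    qed
    ultimately have "2 * r * \<bar>y\<bar> \<le> 2 * (y - e)^2 + 2 + r^2" by linarith
    then have "\<bar>y\<bar> \<le> (2 * (y - e)^2 + 2 + r^2) / (2 * r)" using r1 by (simp add: field_simps)
    also have "\<dots> = (y - e)^2 / r + 1 / r + r / 2" using r1 by (simp add: field_simps power2_eq_square)
    finally show ?thesis .
  qed
  have "(\<integral>\<^sup>+d. ennreal (ctrw_kernel p u d * \<bar>real_of_int d - real_of_int D\<bar>) \<partial>count_space UNIV)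
      \<le> (\<integral>\<^sup>+d. ennreal (1 / r) * ennreal (ctrw_kernel p u d * (real_of_int d - u * bb)^2)
             + ennreal (1 / r + r / 2) * ennreal (ctrw_kernel p u d) \<partial>count_space UNIV)"
  proof (intro nn_integral_mono)
    fix d :: int
    have k0: "0 \<le> ctrw_kernel p u d" using kernel_nn[OF u] .
    have e: "\<bar>real_of_int D - u * bb\<bar> \<le> 1" using hD .
    have "\<bar>real_of_int d - real_of_int D\<bar> \<le> ((real_of_int d - real_of_int D) - (u * bb - real_of_int D))^2 / r + 1 / r + r / 2"
      by (rule pt) (use e in \<open>simp add: abs_minus_commute\<close>)
    also have "((real_of_int d - real_of_int D) - (u * bb - real_of_int D)) = real_of_int d - u * bb" by simp
    finally have "ctrw_kernel p u d * \<bar>real_of_int d - real_of_int D\<bar>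
        \<le> ctrw_kernel p u d * ((real_of_int d - u * bb)^2 / r + 1 / r + r / 2)"
      using k0 by (intro mult_left_mono) auto
    also have "\<dots> = (1 / r) * (ctrw_kernel p u d * (real_of_int d - u * bb)^2) + (1 / r + r / 2) * ctrw_kernel p u d"
      by (simp add: algebra_simps)
    finally show "ennreal (ctrw_kernel p u d * \<bar>real_of_int d - real_of_int D\<bar>)
        \<le> ennreal (1 / r) * ennreal (ctrw_kernel p u d * (real_of_int d - u * bb)^2)
             + ennreal (1 / r + r / 2) * ennreal (ctrw_kernel p u d)"
      using k0 r1 by (simp add: ennreal_mult[symmetric] ennreal_plus[symmetric] del: ennreal_plus)
  qed
  also have "\<dots> = ennreal (1 / r) * ennreal (u * s2) + ennreal (1 / r + r / 2) * 1"
    by (simp add: nn_integral_add nn_integral_cmult kernel_var[OF u] kernel_one[OF u])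
  also have "\<dots> = ennreal (u * s2 / r + (1 / r + r / 2))"
    using r1 u s2_nonneg by (simp add: ennreal_mult[symmetric] ennreal_plus[symmetric] del: ennreal_plus)
  also have "\<dots> \<le> ennreal ((s2 + 2) * (sqrt u + 1))"
  proof (intro ennreal_leI)
    have "u / r \<le> r" using ur r1 by (simp add: field_simps power2_eq_square)
    then have a: "u * s2 / r \<le> s2 * r" using s2_nonneg
      by (metis mult.commute mult_left_mono times_divide_eq_right)
    have "1 / r \<le> 1" using r1 by simp
    then have b: "1 / r \<le> r" using r1 by linarith
    show "u * s2 / r + (1 / r + r / 2) \<le> (s2 + 2) * (sqrt u + 1)"
      using a b r1 unfolding r_def[symmetric] by (simp add: algebra_simps)
  qed
  finally show ?thesis .
qed

end

definition chi :: "int \<Rightarrow> int \<Rightarrow> int \<Rightarrow> int \<Rightarrow> ennreal" where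
  "chi a1 a2 x y = (if (a1 < x \<and> y \<le> a2) \<or> (x \<le> a1 \<and> a2 < y) then 1 else 0)"

lemma chi_count:
  "(\<integral>\<^sup>+m. chi a1 a2 (m + i) (m + i + d) \<partial>count_space UNIV) = ennreal \<bar>real_of_int (d - (a2 - a1))\<bar>"
proof -
  have "bij_betw (\<lambda>m. m + i) UNIV UNIV"
    by (rule bij_betwI[of _ _ _ "\<lambda>x. x - i"]) auto
  from nn_integral_bij_count_space[OF this, of "\<lambda>z. chi a1 a2 z (z + d)"]
  have "(\<integral>\<^sup>+m. chi a1 a2 (m + i) (m + i + d) \<partial>count_space UNIV) = (\<integral>\<^sup>+z. chi a1 a2 z (z + d) \<partial>count_space UNIV)"
    by (simp add: add.assoc)
  also have "\<dots> = (\<integral>\<^sup>+z. indicator {z. (a1 < z \<and> z + d \<le> a2) \<or> (z \<le> a1 \<and> a2 < z + d)} z \<partial>count_space UNIV)"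
    by (intro nn_integral_cong) (simp add: chi_def indicator_def)
  also have "\<dots> = ennreal \<bar>real_of_int (d - (a2 - a1))\<bar>"
  proof (cases "d \<le> a2 - a1")
    case True
    then have "{z. (a1 < z \<and> z + d \<le> a2) \<or> (z \<le> a1 \<and> a2 < z + d)} = {a1<..a2 - d}" by auto
    then show ?thesis using True by (simp add: ennreal_of_nat_eq_real_of_nat)
  next
    case False
    then have "{z. (a1 < z \<and> z + d \<le> a2) \<or> (z \<le> a1 \<and> a2 < z + d)} = {a2 - d<..a1}" by auto
    then show ?thesis using False by (simp add: ennreal_of_nat_eq_real_of_nat)
  qed
  finally show ?thesis .
qed

context kern begin

lemma sum_R:
  assumes S: "0 \<le> S" and u: "0 \<le> u" and hD: "\<bar>real_of_int (a2 - a1) - u * bb\<bar> \<le> 1"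
  shows "(\<integral>\<^sup>+m. \<integral>\<^sup>+i. \<integral>\<^sup>+d. ennreal (ctrw_kernel p S i * ctrw_kernel p u d) * chi a1 a2 (m + i) (m + i + d)
            \<partial>count_space UNIV \<partial>count_space UNIV \<partial>count_space UNIV) \<le> ennreal ((s2 + 2) * (sqrt u + 1))"
proof -
  let ?F = "\<lambda>m i d. ennreal (ctrw_kernel p S i * ctrw_kernel p u d) * chi a1 a2 (m + i) (m + i + d)"
  have "(\<integral>\<^sup>+m. \<integral>\<^sup>+i. \<integral>\<^sup>+d. ?F m i d \<partial>count_space UNIV \<partial>count_space UNIV \<partial>count_space UNIV)
      = (\<integral>\<^sup>+i. \<integral>\<^sup>+m. \<integral>\<^sup>+d. ?F m i d \<partial>count_space UNIV \<partial>count_space UNIV \<partial>count_space UNIV)"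
    by (rule nn_swap_count)
  also have "\<dots> = (\<integral>\<^sup>+i. \<integral>\<^sup>+d. \<integral>\<^sup>+m. ?F m i d \<partial>count_space UNIV \<partial>count_space UNIV \<partial>count_space UNIV)"
    by (intro nn_integral_cong nn_swap_count)
  also have "\<dots> = (\<integral>\<^sup>+i. \<integral>\<^sup>+d. ennreal (ctrw_kernel p S i * ctrw_kernel p u d) * ennreal \<bar>real_of_int (d - (a2 - a1))\<bar>
       \<partial>count_space UNIV \<partial>count_space UNIV)"
    by (intro nn_integral_cong) (simp add: nn_integral_cmult chi_count)
  also have "\<dots> = (\<integral>\<^sup>+i. ennreal (ctrw_kernel p S i) * (\<integral>\<^sup>+d. ennreal (ctrw_kernel p u d * \<bar>real_of_int d - real_of_int (a2 - a1)\<bar>)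
       \<partial>count_space UNIV) \<partial>count_space UNIV)"
  proof (intro nn_integral_cong)
    fix i :: int
    have "(\<integral>\<^sup>+d. ennreal (ctrw_kernel p S i * ctrw_kernel p u d) * ennreal \<bar>real_of_int (d - (a2 - a1))\<bar> \<partial>count_space UNIV)
        = (\<integral>\<^sup>+d. ennreal (ctrw_kernel p S i) * ennreal (ctrw_kernel p u d * \<bar>real_of_int d - real_of_int (a2 - a1)\<bar>) \<partial>count_space UNIV)"
      by (intro nn_integral_cong) (simp add: ennreal_mult[symmetric] kernel_nn S u mult.assoc)
    also have "\<dots> = ennreal (ctrw_kernel p S i) * (\<integral>\<^sup>+d. ennreal (ctrw_kernel p u d * \<bar>real_of_int d - real_of_int (a2 - a1)\<bar>) \<partial>count_space UNIV)"
      by (simp add: nn_integral_cmult)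
    finally show "(\<integral>\<^sup>+d. ennreal (ctrw_kernel p S i * ctrw_kernel p u d) * ennreal \<bar>real_of_int (d - (a2 - a1))\<bar> \<partial>count_space UNIV)
        = ennreal (ctrw_kernel p S i) * (\<integral>\<^sup>+d. ennreal (ctrw_kernel p u d * \<bar>real_of_int d - real_of_int (a2 - a1)\<bar>) \<partial>count_space UNIV)" .
  qed
  also have "\<dots> = (\<integral>\<^sup>+i. ennreal (ctrw_kernel p S i) \<partial>count_space UNIV) * (\<integral>\<^sup>+d. ennreal (ctrw_kernel p u d * \<bar>real_of_int d - real_of_int (a2 - a1)\<bar>)
       \<partial>count_space UNIV)"
    by (simp add: nn_integral_multc)
  also have "\<dots> = (\<integral>\<^sup>+d. ennreal (ctrw_kernel p u d * \<bar>real_of_int d - real_of_int (a2 - a1)\<bar>) \<partial>count_space UNIV)"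
    by (simp add: kernel_one[OF S])
  also have "\<dots> \<le> ennreal ((s2 + 2) * (sqrt u + 1))"
    by (rule abs_bound[OF u hD])
  finally show ?thesis .
qed

end

lemma ctrw_meas:
  assumes "ctrw M p m W"
  shows "(\<lambda>\<omega>. W \<omega> t) \<in> M \<rightarrow>\<^sub>M count_space UNIV"
proof -
  have "W \<in> M \<rightarrow>\<^sub>M (\<Pi>\<^sub>M t\<in>UNIV. count_space UNIV)" using assms by (simp add: ctrw_def)
  from measurable_compose[OF this measurable_component_singleton[of t UNIV "\<lambda>_. count_space UNIV"]]
  show ?thesis by simp
qed

lemma nn_point2: "(\<integral>\<^sup>+x. (if a = x then f x else 0) \<partial>count_space UNIV) = (f a :: ennreal)"
proof -
  have "(\<integral>\<^sup>+x. (if a = x then f x else 0) \<partial>count_space UNIV) = (\<integral>\<^sup>+x. (if x = a then f a else 0) \<partial>count_space UNIV)"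
    by (intro nn_integral_cong) auto
  then show ?thesis by (simp add: nn_point)
qed

lemma walk_law:
  fixes M :: "'a measure" and W :: "'a \<Rightarrow> real \<Rightarrow> int"
  assumes M: "prob_space M" and W: "ctrw M p m W" and S: "0 \<le> S" and ST: "S \<le> T"
  shows "emeasure M {\<omega> \<in> space M. (a1 < W \<omega> S \<and> W \<omega> T \<le> a2) \<or> (W \<omega> S \<le> a1 \<and> a2 < W \<omega> T)} =
     (\<integral>\<^sup>+i. \<integral>\<^sup>+d. ennreal (ctrw_kernel p S i * ctrw_kernel p (T - S) d) * chi a1 a2 (m + i) (m + i + d)
        \<partial>count_space UNIV \<partial>count_space UNIV)"
proof -
  interpret prob_space M by (rule M)
  have [measurable]: "(\<lambda>\<omega>. W \<omega> t) \<in> M \<rightarrow>\<^sub>M count_space UNIV" for t using ctrw_meas[OF W] .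
  define I1 where "I1 \<omega> = W \<omega> S - W \<omega> 0" for \<omega>
  define D where "D \<omega> = W \<omega> T - W \<omega> S" for \<omega>
  have [measurable]: "I1 \<in> M \<rightarrow>\<^sub>M count_space UNIV" unfolding I1_def by measurable
  have [measurable]: "D \<in> M \<rightarrow>\<^sub>M count_space UNIV" unfolding D_def by measurable
  let ?G = "\<lambda>i d. chi a1 a2 (m + i) (m + i + d)"
  have W0: "AE \<omega> in M. W \<omega> 0 = m" using W by (simp add: ctrw_def)
  have ind: "prob_space.indep_vars M (\<lambda>_. count_space UNIV)
          (\<lambda>i \<omega>. W \<omega> ([0, S, T] ! Suc i) - W \<omega> ([0, S, T] ! i)) {..<length [0, S, T] - 1}"
    using W S ST unfolding ctrw_def by (metis (no_types) list.set_intros sorted2 sorted1 order.trans set_ConsD empty_iff list.set(1) order_refl)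
  have marg: "measure M {\<omega> \<in> space M. W \<omega> t - W \<omega> s = x} = ctrw_kernel p (t - s) x" if "0 \<le> s" "s \<le> t" for s t x
    using W that unfolding ctrw_def by blast
  define X where "X = (\<lambda>i \<omega>. W \<omega> ([0, S, T] ! Suc i) - W \<omega> ([0, S, T] ! i))"
  have iv: "indep_sets (\<lambda>j. sigma_sets (space M) {X j -` A \<inter> space M |A. A \<in> sets (count_space UNIV)}) {..<2::nat}"
    using ind unfolding indep_vars_def X_def by (simp add: numeral_2_eq_2)
  have joint: "emeasure M {\<omega> \<in> space M. I1 \<omega> = i \<and> D \<omega> = d} = ennreal (ctrw_kernel p S i * ctrw_kernel p (T - S) d)" for i d
  proof -
    define A where "A = (\<lambda>j::nat. if j = 0 then X 0 -` {i} \<inter> space M else X 1 -` {d} \<inter> space M)"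
    have "measure M (\<Inter>j\<in>{0,1::nat}. A j) = (\<Prod>j\<in>{0,1::nat}. measure M (A j))"
    proof (rule indep_setsD[OF iv])
      show "\<forall>j\<in>{0, 1}. A j \<in> sigma_sets (space M) {X j -` A \<inter> space M |A. A \<in> sets (count_space UNIV)}"
        unfolding A_def by (auto intro!: sigma_sets.Basic)
    qed auto
    moreover have "(\<Inter>j\<in>{0,1::nat}. A j) = {\<omega> \<in> space M. I1 \<omega> = i \<and> D \<omega> = d}"
      by (auto simp: A_def X_def I1_def D_def)
    moreover have "A 0 = {\<omega> \<in> space M. W \<omega> S - W \<omega> 0 = i}" by (auto simp: A_def X_def)
    moreover have "A 1 = {\<omega> \<in> space M. W \<omega> T - W \<omega> S = d}" by (auto simp: A_def X_def)
    ultimately have "measure M {\<omega> \<in> space M. I1 \<omega> = i \<and> D \<omega> = d} = ctrw_kernel p (S - 0) i * ctrw_kernel p (T - S) d"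
      using marg[of 0 S i] marg[of S T d] S ST by simp
    then show ?thesis by (simp add: emeasure_eq_measure)
  qed
  have "emeasure M {\<omega> \<in> space M. (a1 < W \<omega> S \<and> W \<omega> T \<le> a2) \<or> (W \<omega> S \<le> a1 \<and> a2 < W \<omega> T)}
      = (\<integral>\<^sup>+\<omega>. indicator {\<omega> \<in> space M. (a1 < W \<omega> S \<and> W \<omega> T \<le> a2) \<or> (W \<omega> S \<le> a1 \<and> a2 < W \<omega> T)} \<omega> \<partial>M)"
    by (rule nn_integral_indicator[symmetric]) measurable
  also have "\<dots> = (\<integral>\<^sup>+\<omega>. ?G (I1 \<omega>) (D \<omega>) \<partial>M)"
  proof (rule nn_integral_cong_AE)
    show "AE \<omega> in M. indicator {\<omega> \<in> space M. (a1 < W \<omega> S \<and> W \<omega> T \<le> a2) \<or> (W \<omega> S \<le> a1 \<and> a2 < W \<omega> T)} \<omega> = ?G (I1 \<omega>) (D \<omega>)"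
      using W0 AE_space by eventually_elim (auto simp: I1_def D_def chi_def indicator_def)
  qed
  also have "\<dots> = (\<integral>\<^sup>+\<omega>. \<integral>\<^sup>+i. (if I1 \<omega> = i then ?G i (D \<omega>) else 0) \<partial>count_space UNIV \<partial>M)"
    by (intro nn_integral_cong) (simp add: nn_point2)
  also have "\<dots> = (\<integral>\<^sup>+i. \<integral>\<^sup>+\<omega>. (if I1 \<omega> = i then ?G i (D \<omega>) else 0) \<partial>M \<partial>count_space UNIV)"
    by (rule nn_integral_count_space_nn_integral) auto
  also have "\<dots> = (\<integral>\<^sup>+i. \<integral>\<^sup>+d. ennreal (ctrw_kernel p S i * ctrw_kernel p (T - S) d) * ?G i d \<partial>count_space UNIV \<partial>count_space UNIV)"
  proof (intro nn_integral_cong)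
    fix i :: int
    have "(\<integral>\<^sup>+\<omega>. (if I1 \<omega> = i then ?G i (D \<omega>) else 0) \<partial>M)
       = (\<integral>\<^sup>+\<omega>. \<integral>\<^sup>+d. (if D \<omega> = d then (if I1 \<omega> = i then ?G i d else 0) else 0) \<partial>count_space UNIV \<partial>M)"
      by (intro nn_integral_cong) (simp add: nn_point2)
    also have "\<dots> = (\<integral>\<^sup>+d. \<integral>\<^sup>+\<omega>. (if D \<omega> = d then (if I1 \<omega> = i then ?G i d else 0) else 0) \<partial>M \<partial>count_space UNIV)"
      by (rule nn_integral_count_space_nn_integral) auto
    also have "\<dots> = (\<integral>\<^sup>+d. ?G i d * emeasure M {\<omega> \<in> space M. I1 \<omega> = i \<and> D \<omega> = d} \<partial>count_space UNIV)"
    proof (intro nn_integral_cong)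
      fix d :: int
      have "(\<integral>\<^sup>+\<omega>. (if D \<omega> = d then (if I1 \<omega> = i then ?G i d else 0) else 0) \<partial>M)
          = (\<integral>\<^sup>+\<omega>. ?G i d * indicator {\<omega> \<in> space M. I1 \<omega> = i \<and> D \<omega> = d} \<omega> \<partial>M)"
        by (intro nn_integral_cong) (auto simp: indicator_def)
      also have "\<dots> = ?G i d * emeasure M {\<omega> \<in> space M. I1 \<omega> = i \<and> D \<omega> = d}"
        by (rule nn_integral_cmult_indicator) measurable
      finally show "(\<integral>\<^sup>+\<omega>. (if D \<omega> = d then (if I1 \<omega> = i then ?G i d else 0) else 0) \<partial>M)
          = ?G i d * emeasure M {\<omega> \<in> space M. I1 \<omega> = i \<and> D \<omega> = d}" .
    qed
    also have "\<dots> = (\<integral>\<^sup>+d. ennreal (ctrw_kernel p S i * ctrw_kernel p (T - S) d) * ?G i d \<partial>count_space UNIV)"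
      by (simp add: joint mult.commute)
    finally show "(\<integral>\<^sup>+\<omega>. (if I1 \<omega> = i then ?G i (D \<omega>) else 0) \<partial>M)
       = (\<integral>\<^sup>+d. ennreal (ctrw_kernel p S i * ctrw_kernel p (T - S) d) * ?G i d \<partial>count_space UNIV)" .
  qed
  finally show ?thesis .
qed

lemma real_ineq:
  fixes g N e \<mu> q1 Kp :: real and k :: nat
  assumes g: "\<bar>g\<bar> \<le> N + \<mu> * q1" and N0: "0 \<le> N" and Ne: "N \<le> e" and mu0: "0 \<le> \<mu>" and muK: "\<mu> \<le> Kp"
    and K1: "1 \<le> Kp" and q0: "0 \<le> q1" and q1: "q1 \<le> 1" and k1: "1 \<le> k" and k6: "k \<le> 6"
  shows "\<bar>g\<bar>^k \<le> 64 * (e^(k-1) * N) + 64 * (Kp^6 * q1)"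
proof -
  have pk: "(x + y)^k \<le> 2^k * (x^k + y^k)" if "0 \<le> x" "0 \<le> y" for x y :: real
  proof -
    have "(x + y)^k \<le> (2 * max x y)^k" using that by (intro power_mono) auto
    also have "\<dots> = 2^k * (max x y)^k" by (simp add: power_mult_distrib)
    also have "(max x y)^k \<le> x^k + y^k" using that by (cases "x \<le> y") (auto simp: max_def)
    then have "2^k * (max x y)^k \<le> 2^k * (x^k + y^k)" by simp
    finally show ?thesis .
  qed
  have mq0: "0 \<le> \<mu> * q1" using mu0 q0 by simp
  have "\<bar>g\<bar>^k \<le> (N + \<mu> * q1)^k" using g by (intro power_mono) auto
  also have "\<dots> \<le> 2^k * (N^k + (\<mu> * q1)^k)" using pk N0 mq0 by blast
  also have "\<dots> \<le> 64 * (e^(k-1) * N + Kp^6 * q1)"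
  proof (rule mult_mono)
    show "(2::real)^k \<le> 64"
    proof -
      have "(2::real)^k \<le> 2^6" using k6 by (intro power_increasing) auto
      then show ?thesis by simp
    qed
    have a: "N^k \<le> e^(k-1) * N"
    proof -
      have "N^k = N^(k-1) * N" using k1 by (metis Suc_diff_le diff_Suc_1 power_Suc2)
      also have "\<dots> \<le> e^(k-1) * N" using N0 Ne by (intro mult_right_mono power_mono) auto
      finally show ?thesis .
    qed
    have b: "(\<mu> * q1)^k \<le> Kp^6 * q1"
    proof -
      have "(\<mu> * q1)^k = \<mu>^k * q1^k" by (simp add: power_mult_distrib)
      also have "q1^k \<le> q1"
      proof -
        have "q1^k = q1^(k-1) * q1" using k1 by (metis Suc_diff_le diff_Suc_1 power_Suc2)
        also have "\<dots> \<le> 1 * q1" using q0 q1 by (intro mult_right_mono power_le_one) auto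
        finally show ?thesis by simp
      qed
      then have "\<mu>^k * q1^k \<le> \<mu>^k * q1" using mu0 by (intro mult_left_mono) auto
      also have "\<mu>^k \<le> Kp^6"
      proof -
        have "\<mu>^k \<le> Kp^k" using mu0 muK by (intro power_mono) auto
        also have "\<dots> \<le> Kp^6" using K1 k6 by (intro power_increasing) auto
        finally show ?thesis .
      qed
      then have "\<mu>^k * q1 \<le> Kp^6 * q1" using q0 by (intro mult_right_mono) auto
      finally show ?thesis .
    qed
    show "N^k + (\<mu> * q1)^k \<le> e^(k-1) * N + Kp^6 * q1" using a b by simp
  qed (use N0 mq0 in auto)
  finally show ?thesis by (simp add: algebra_simps)
qed

lemma nn_indep_expand:
  fixes E :: "'a \<Rightarrow> nat" and g :: "nat \<Rightarrow> ennreal"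
  assumes M: "prob_space M" and E[measurable]: "E \<in> M \<rightarrow>\<^sub>M count_space UNIV" and C[measurable]: "C \<in> sets M"
  shows "(\<integral>\<^sup>+\<omega>. g (E \<omega>) * indicator C \<omega> \<partial>M) = (\<integral>\<^sup>+v. g v * emeasure M ({\<omega>\<in>space M. E \<omega> = v} \<inter> C) \<partial>count_space UNIV)"
proof -
  have "(\<integral>\<^sup>+\<omega>. g (E \<omega>) * indicator C \<omega> \<partial>M) = (\<integral>\<^sup>+\<omega>. \<integral>\<^sup>+v. (if E \<omega> = v then g v * indicator C \<omega> else 0) \<partial>count_space UNIV \<partial>M)"
    by (intro nn_integral_cong) (simp add: nn_point2)
  also have "\<dots> = (\<integral>\<^sup>+v. \<integral>\<^sup>+\<omega>. (if E \<omega> = v then g v * indicator C \<omega> else 0) \<partial>M \<partial>count_space UNIV)"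
    by (rule nn_integral_count_space_nn_integral) auto
  also have "\<dots> = (\<integral>\<^sup>+v. g v * emeasure M ({\<omega>\<in>space M. E \<omega> = v} \<inter> C) \<partial>count_space UNIV)"
  proof (intro nn_integral_cong)
    fix v
    have "(\<integral>\<^sup>+\<omega>. (if E \<omega> = v then g v * indicator C \<omega> else 0) \<partial>M) = (\<integral>\<^sup>+\<omega>. g v * indicator ({\<omega>\<in>space M. E \<omega> = v} \<inter> C) \<omega> \<partial>M)"
      by (intro nn_integral_cong) (auto simp: indicator_def)
    also have "\<dots> = g v * emeasure M ({\<omega>\<in>space M. E \<omega> = v} \<inter> C)"
      by (rule nn_integral_cmult_indicator) measurable
    finally show "(\<integral>\<^sup>+\<omega>. (if E \<omega> = v then g v * indicator C \<omega> else 0) \<partial>M) = g v * emeasure M ({\<omega>\<in>space M. E \<omega> = v} \<inter> C)" .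
  qed
  finally show ?thesis .
qed

lemma nn_indep_mult:
  fixes E :: "'a \<Rightarrow> nat" and g :: "nat \<Rightarrow> ennreal"
  assumes M: "prob_space M" and E[measurable]: "E \<in> M \<rightarrow>\<^sub>M count_space UNIV" and C[measurable]: "C \<in> sets M"
    and ind: "\<And>v. emeasure M ({\<omega>\<in>space M. E \<omega> = v} \<inter> C) = emeasure M {\<omega>\<in>space M. E \<omega> = v} * emeasure M C"
  shows "(\<integral>\<^sup>+\<omega>. g (E \<omega>) * indicator C \<omega> \<partial>M) = (\<integral>\<^sup>+\<omega>. g (E \<omega>) \<partial>M) * emeasure M C"
proof -
  have "(\<integral>\<^sup>+\<omega>. g (E \<omega>) \<partial>M) = (\<integral>\<^sup>+\<omega>. g (E \<omega>) * indicator (space M) \<omega> \<partial>M)"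
    by (intro nn_integral_cong) auto
  also have "\<dots> = (\<integral>\<^sup>+v. g v * emeasure M ({\<omega>\<in>space M. E \<omega> = v} \<inter> space M) \<partial>count_space UNIV)"
    by (rule nn_indep_expand[OF M E]) simp
  also have "\<dots> = (\<integral>\<^sup>+v. g v * emeasure M {\<omega>\<in>space M. E \<omega> = v} \<partial>count_space UNIV)"
    by (intro nn_integral_cong) (simp add: Int_absorb2 subset_iff)
  finally have e1: "(\<integral>\<^sup>+\<omega>. g (E \<omega>) \<partial>M) = (\<integral>\<^sup>+v. g v * emeasure M {\<omega>\<in>space M. E \<omega> = v} \<partial>count_space UNIV)" .
  have "(\<integral>\<^sup>+\<omega>. g (E \<omega>) * indicator C \<omega> \<partial>M) = (\<integral>\<^sup>+v. g v * emeasure M ({\<omega>\<in>space M. E \<omega> = v} \<inter> C) \<partial>count_space UNIV)"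
    by (rule nn_indep_expand[OF M E C])
  also have "\<dots> = (\<integral>\<^sup>+v. g v * emeasure M {\<omega>\<in>space M. E \<omega> = v} * emeasure M C \<partial>count_space UNIV)"
    by (simp add: ind mult.assoc)
  also have "\<dots> = (\<integral>\<^sup>+v. g v * emeasure M {\<omega>\<in>space M. E \<omega> = v} \<partial>count_space UNIV) * emeasure M C"
    by (simp add: nn_integral_multc)
  finally show ?thesis using e1 by simp
qed

lemma pow_le_1_6:
  fixes v :: nat assumes "k \<le> 6" shows "real v ^ k \<le> 1 + real v ^ 6"
proof (cases "v = 0")
  case True then show ?thesis by (cases k) auto
next
  case False
  then have "1 \<le> real v" by simp
  then have "real v ^ k \<le> real v ^ 6" using assms by (intro power_increasing) auto
  then show ?thesis by simp
qed

lemma G_bound: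
  fixes M :: "'a measure" and E :: "'a \<Rightarrow> nat" and W :: "nat \<Rightarrow> 'a \<Rightarrow> real \<Rightarrow> int" and R :: ennreal
  assumes M: "prob_space M" and E[measurable]: "E \<in> M \<rightarrow>\<^sub>M count_space UNIV"
    and As: "\<And>j. 1 \<le> j \<Longrightarrow> evA M (W j) n y b s t \<in> sets M"
    and Bs: "\<And>j. 1 \<le> j \<Longrightarrow> evB M (W j) n y b s t \<in> sets M"
    and CR: "\<And>j. 1 \<le> j \<Longrightarrow> emeasure M (evA M (W j) n y b s t \<union> evB M (W j) n y b s t) \<le> R"
    and ind: "\<And>j v. 1 \<le> j \<Longrightarrow> emeasure M ({\<omega>\<in>space M. E \<omega> = v} \<inter> (evA M (W j) n y b s t \<union> evB M (W j) n y b s t))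
        = emeasure M {\<omega>\<in>space M. E \<omega> = v} * emeasure M (evA M (W j) n y b s t \<union> evB M (W j) n y b s t)"
    and int6: "integrable M (\<lambda>\<omega>. real (E \<omega>) ^ 6)" and K: "(\<integral>\<omega>. real (E \<omega>) ^ 6 \<partial>M) \<le> K"
    and k1: "1 \<le> k" and k6: "k \<le> 6"
  shows "(\<integral>\<^sup>+\<omega>. ennreal (\<bar>Gm M E W n y b s t \<omega>\<bar> ^ k) \<partial>M) \<le> ennreal (64 * ((1 + K) + (1 + K)^6)) * R"
proof -
  interpret prob_space M by (rule M)
  define A where "A j = evA M (W j) n y b s t" for j
  define B where "B j = evB M (W j) n y b s t" for j
  define C where "C j = A j \<union> B j" for j
  have disj: "A j \<inter> B j = {}" for j by (auto simp: A_def B_def evA_def evB_def)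
  have Cs: "C j \<in> sets M" if "1 \<le> j" for j using As[OF that] Bs[OF that] by (auto simp: C_def A_def B_def)
  have K0: "0 \<le> K"
  proof -
    have "0 \<le> (\<integral>\<omega>. real (E \<omega>) ^ 6 \<partial>M)" by (intro integral_nonneg_AE) auto
    then show ?thesis using K by linarith
  qed
  define Kp where "Kp = 1 + K"
  have Kp1: "1 \<le> Kp" using K0 by (simp add: Kp_def)
  define \<mu> where "\<mu> = (\<integral>\<omega>. real (E \<omega>) \<partial>M)"
  have mu0: "0 \<le> \<mu>" unfolding \<mu>_def by (intro integral_nonneg_AE) auto
  have int1: "integrable M (\<lambda>\<omega>. 1 + real (E \<omega>) ^ 6)" using int6 by auto
  have i1: "(\<integral>\<omega>. 1 + real (E \<omega>) ^ 6 \<partial>M) = 1 + (\<integral>\<omega>. real (E \<omega>) ^ 6 \<partial>M)"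
    using int6 by (simp add: integral_add prob_space)
  have muK: "\<mu> \<le> Kp"
  proof (cases "integrable M (\<lambda>\<omega>. real (E \<omega>))")
    case True
    have "\<mu> \<le> (\<integral>\<omega>. 1 + real (E \<omega>) ^ 6 \<partial>M)"
      unfolding \<mu>_def using pow_le_1_6[of 1] by (intro integral_mono True int1) auto
    then show ?thesis using i1 K by (simp add: Kp_def)
  next
    case False
    then have "\<mu> = 0" by (simp add: \<mu>_def not_integrable_integral_eq)
    then show ?thesis using Kp1 by simp
  qed
  define q1 where "q1 = measure M (C 1)"
  have q1e: "ennreal q1 = emeasure M (C 1)" by (simp add: q1_def emeasure_eq_measure)
  have q1R: "ennreal q1 \<le> R" using CR[of 1] q1e by (simp add: C_def A_def B_def)
  have q10: "0 \<le> q1" by (simp add: q1_def)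
  have q11: "q1 \<le> 1" by (simp add: q1_def)
  have qabs: "\<bar>measure M (A 1) - measure M (B 1)\<bar> \<le> q1"
  proof -
    have "q1 = measure M (A 1) + measure M (B 1)"
      unfolding q1_def C_def using As[of 1] Bs[of 1] disj[of 1]
      by (intro finite_measure_Union) (auto simp: A_def B_def)
    moreover have "0 \<le> measure M (A 1)" "0 \<le> measure M (B 1)" by auto
    ultimately show ?thesis by linarith
  qed
  define N where "N \<omega> = (\<Sum>j=1..E \<omega>. indicator (C j) \<omega> :: real)" for \<omega>
  have N0: "0 \<le> N \<omega>" for \<omega> unfolding N_def by (intro sum_nonneg) auto
  have NE: "N \<omega> \<le> real (E \<omega>)" for \<omega>
  proof -
    have "N \<omega> \<le> real (card {1..E \<omega>}) * 1" unfolding N_def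
      by (intro sum_bounded_above) (auto simp: indicator_def)
    then show ?thesis by simp
  qed
  have pw: "\<bar>Gm M E W n y b s t \<omega>\<bar> ^ k \<le> 64 * (real (E \<omega>) ^ (k-1) * N \<omega>) + 64 * (Kp^6 * q1)" for \<omega>
  proof (rule real_ineq[OF _ N0 NE mu0 muK Kp1 q10 q11 k1 k6])
    have Geq: "Gm M E W n y b s t \<omega> = (\<Sum>j=1..E \<omega>. indicator (A j) \<omega> - indicator (B j) \<omega>) - \<mu> * (measure M (A 1) - measure M (B 1))"
      by (simp add: Gm_def A_def B_def \<mu>_def)
    have "\<bar>\<Sum>j=1..E \<omega>. indicator (A j) \<omega> - indicator (B j) \<omega> :: real\<bar> \<le> (\<Sum>j=1..E \<omega>. \<bar>indicator (A j) \<omega> - indicator (B j) \<omega> :: real\<bar>)"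
      by (rule sum_abs)
    also have "\<dots> \<le> N \<omega>" unfolding N_def
      by (intro sum_mono) (auto simp: indicator_def C_def)
    finally have s1: "\<bar>\<Sum>j=1..E \<omega>. indicator (A j) \<omega> - indicator (B j) \<omega> :: real\<bar> \<le> N \<omega>" .
    have s2: "\<bar>\<mu> * (measure M (A 1) - measure M (B 1))\<bar> \<le> \<mu> * q1"
      using qabs mu0 by (simp add: abs_mult mult_left_mono)
    show "\<bar>Gm M E W n y b s t \<omega>\<bar> \<le> N \<omega> + \<mu> * q1"
      unfolding Geq using s1 s2 by linarith
  qed
  define g where "g j v = ennreal (real v ^ (k-1) * (if 1 \<le> j \<and> j \<le> v then 1 else 0))" for j v :: nat
  define F where "F j \<omega> = g j (E \<omega>) * indicator (C j) \<omega>" for j \<omega>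
  have Fm[measurable]: "F j \<in> borel_measurable M" for j
  proof (cases "j = 0")
    case True
    then have "F j = (\<lambda>_. 0)" by (simp add: F_def g_def fun_eq_iff)
    then show ?thesis by simp
  next
    case False
    then have [measurable]: "C j \<in> sets M" using Cs by simp
    show ?thesis unfolding F_def by measurable
  qed
  have sumF: "(\<Sum>j. F j \<omega>) = ennreal (real (E \<omega>) ^ (k-1) * N \<omega>)" for \<omega>
  proof -
    have "(\<Sum>j. F j \<omega>) = (\<Sum>j\<in>{1..E \<omega>}. F j \<omega>)"
      by (rule suminf_finite) (auto simp: F_def g_def)
    also have "\<dots> = (\<Sum>j\<in>{1..E \<omega>}. ennreal (real (E \<omega>) ^ (k-1) * indicator (C j) \<omega>))"
      by (intro sum.cong) (auto simp: F_def g_def indicator_def)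
    also have "\<dots> = ennreal (\<Sum>j\<in>{1..E \<omega>}. real (E \<omega>) ^ (k-1) * indicator (C j) \<omega>)"
      by (rule sum_ennreal) auto
    also have "\<dots> = ennreal (real (E \<omega>) ^ (k-1) * N \<omega>)"
      by (simp add: N_def sum_distrib_left)
    finally show ?thesis .
  qed
  have sumg: "(\<Sum>j. g j v) = ennreal (real v ^ k)" for v
  proof -
    have "(\<Sum>j. g j v) = (\<Sum>j\<in>{1..v}. g j v)"
      by (rule suminf_finite) (auto simp: g_def)
    also have "\<dots> = (\<Sum>j\<in>{1..v}. ennreal (real v ^ (k-1)))"
      by (intro sum.cong) (auto simp: g_def)
    also have "\<dots> = ennreal (real v * real v ^ (k-1))"
      by (simp add: ennreal_of_nat_eq_real_of_nat ennreal_mult[symmetric])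
    also have "real v * real v ^ (k-1) = real v ^ k"
      using k1 by (metis Suc_diff_le diff_Suc_1 power_Suc)
    finally show ?thesis .
  qed
  have Ek: "(\<integral>\<^sup>+\<omega>. ennreal (real (E \<omega>) ^ k) \<partial>M) \<le> ennreal Kp"
  proof -
    have "(\<integral>\<^sup>+\<omega>. ennreal (real (E \<omega>) ^ k) \<partial>M) \<le> (\<integral>\<^sup>+\<omega>. ennreal (1 + real (E \<omega>) ^ 6) \<partial>M)"
      by (intro nn_integral_mono ennreal_leI pow_le_1_6[OF k6])
    also have "\<dots> = ennreal (\<integral>\<omega>. 1 + real (E \<omega>) ^ 6 \<partial>M)"
      by (rule nn_integral_eq_integral[OF int1]) auto
    also have "\<dots> \<le> ennreal Kp" unfolding i1 Kp_def using K by (intro ennreal_leI) linarith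
    finally show ?thesis .
  qed
  have "(\<integral>\<^sup>+\<omega>. ennreal (\<bar>Gm M E W n y b s t \<omega>\<bar> ^ k) \<partial>M)
      \<le> (\<integral>\<^sup>+\<omega>. ennreal 64 * (\<Sum>j. F j \<omega>) + ennreal (64 * (Kp^6 * q1)) \<partial>M)"
  proof (intro nn_integral_mono)
    fix \<omega>
    have "ennreal (\<bar>Gm M E W n y b s t \<omega>\<bar> ^ k) \<le> ennreal (64 * (real (E \<omega>) ^ (k-1) * N \<omega>) + 64 * (Kp^6 * q1))"
      using pw by (rule ennreal_leI)
    also have "\<dots> = ennreal 64 * ennreal (real (E \<omega>) ^ (k-1) * N \<omega>) + ennreal (64 * (Kp^6 * q1))"
    proof -
      have c: "0 \<le> real (E \<omega>) ^ (k-1) * N \<omega>" using N0[of \<omega>] by simp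
      have a: "0 \<le> 64 * (real (E \<omega>) ^ (k-1) * N \<omega>)" using c by simp
      have b: "0 \<le> 64 * (Kp^6 * q1)" using Kp1 q10 by simp
      show ?thesis by (simp only: ennreal_plus[OF a b] ennreal_mult[OF _ c, of 64])
    qed
    finally show "ennreal (\<bar>Gm M E W n y b s t \<omega>\<bar> ^ k) \<le> ennreal 64 * (\<Sum>j. F j \<omega>) + ennreal (64 * (Kp^6 * q1))"
      by (simp only: sumF)
  qed
  also have "\<dots> = ennreal 64 * (\<Sum>j. \<integral>\<^sup>+\<omega>. F j \<omega> \<partial>M) + ennreal (64 * (Kp^6 * q1))"
    by (simp add: nn_integral_add nn_integral_cmult nn_integral_suminf emeasure_space_1)
  also have "\<dots> \<le> ennreal 64 * (\<Sum>j. (\<integral>\<^sup>+\<omega>. g j (E \<omega>) \<partial>M) * R) + ennreal (64 * Kp^6) * R"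
  proof (intro add_mono mult_left_mono suminf_le)
    fix j :: nat
    show "(\<integral>\<^sup>+\<omega>. F j \<omega> \<partial>M) \<le> (\<integral>\<^sup>+\<omega>. g j (E \<omega>) \<partial>M) * R"
    proof (cases "j = 0")
      case True
      then show ?thesis by (simp add: F_def g_def)
    next
      case False
      then have j1: "1 \<le> j" by simp
      have "(\<integral>\<^sup>+\<omega>. F j \<omega> \<partial>M) = (\<integral>\<^sup>+\<omega>. g j (E \<omega>) \<partial>M) * emeasure M (C j)"
        unfolding F_def
        by (rule nn_indep_mult[OF M E Cs[OF j1]]) (use ind[OF j1] in \<open>simp add: C_def A_def B_def\<close>)
      also have "\<dots> \<le> (\<integral>\<^sup>+\<omega>. g j (E \<omega>) \<partial>M) * R"
        using CR[OF j1] by (intro mult_left_mono) (auto simp: C_def A_def B_def)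
      finally show ?thesis .
    qed
  next
    have "ennreal (64 * (Kp^6 * q1)) = ennreal (64 * Kp^6) * ennreal q1"
      using Kp1 q10 by (simp add: ennreal_mult[symmetric] mult.assoc)
    also have "\<dots> \<le> ennreal (64 * Kp^6) * R" using q1R by (intro mult_left_mono) auto
    finally show "ennreal (64 * (Kp^6 * q1)) \<le> ennreal (64 * Kp^6) * R" .
  qed auto
  also have "(\<Sum>j. (\<integral>\<^sup>+\<omega>. g j (E \<omega>) \<partial>M) * R) = (\<integral>\<^sup>+\<omega>. ennreal (real (E \<omega>) ^ k) \<partial>M) * R"
  proof -
    have "(\<Sum>j. (\<integral>\<^sup>+\<omega>. g j (E \<omega>) \<partial>M) * R) = (\<Sum>j. (\<integral>\<^sup>+\<omega>. g j (E \<omega>) \<partial>M)) * R"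
      by (rule ennreal_suminf_multc)
    also have "(\<Sum>j. (\<integral>\<^sup>+\<omega>. g j (E \<omega>) \<partial>M)) = (\<integral>\<^sup>+\<omega>. (\<Sum>j. g j (E \<omega>)) \<partial>M)"
      by (rule nn_integral_suminf[symmetric]) measurable
    also have "\<dots> = (\<integral>\<^sup>+\<omega>. ennreal (real (E \<omega>) ^ k) \<partial>M)" by (simp add: sumg)
    finally show ?thesis .
  qed
  also have "ennreal 64 * ((\<integral>\<^sup>+\<omega>. ennreal (real (E \<omega>) ^ k) \<partial>M) * R) + ennreal (64 * Kp^6) * R
      \<le> ennreal 64 * (ennreal Kp * R) + ennreal (64 * Kp^6) * R"
    using Ek by (intro add_mono mult_left_mono mult_right_mono) auto
  also have "\<dots> = ennreal (64 * (Kp + Kp^6)) * R"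
  proof -
    have a: "0 \<le> 64 * Kp" "0 \<le> 64 * Kp^6" using Kp1 by auto
    have e1: "ennreal (64 * (Kp + Kp^6)) = ennreal (64 * Kp) + ennreal (64 * Kp^6)"
      by (simp only: distrib_left ennreal_plus[OF a])
    have e2: "ennreal (64 * Kp) = ennreal 64 * ennreal Kp" using Kp1 by (intro ennreal_mult) auto
    show ?thesis unfolding e1 e2 by (simp only: distrib_right mult.assoc)
  qed
  finally show ?thesis by (simp add: Kp_def)
qed

theorem lemma4p8:
  fixes M :: "'a measure" and p :: "int \<Rightarrow> real" and \<delta> :: real and ybar :: real
    and eta :: "nat \<Rightarrow> int \<Rightarrow> 'a \<Rightarrow> nat"
    and X :: "nat \<Rightarrow> int \<Rightarrow> nat \<Rightarrow> 'a \<Rightarrow> real \<Rightarrow> int"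
  assumes "prob_space M"
    and "prob_kernel p"
    and "\<delta> > 0"
    and "\<forall>\<theta>. \<bar>\<theta>\<bar> \<le> \<delta> \<longrightarrow> (\<lambda>x. exp (\<theta> * real_of_int x) * p x) summable_on UNIV"
    and "\<forall>n m j. 1 \<le> j \<longrightarrow> ctrw M p m (X n m j)"
    and "\<forall>n m. eta n m \<in> M \<rightarrow>\<^sub>M count_space UNIV"
    and "\<forall>n. prob_space.indep_sets M
           (\<lambda>i. case i of
                   Inl m \<Rightarrow> {eta n m -` A \<inter> space M | A. A \<in> sets (count_space UNIV)}
                 | Inr (m, j) \<Rightarrow> {X n m j -` A \<inter> space M | A.
                                   A \<in> sets (\<Pi>\<^sub>M u\<in>UNIV. count_space UNIV)})
           (range Inl \<union> {Inr (m, j) | m j. 1 \<le> j})"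
    and "\<forall>n x. integrable M (\<lambda>\<omega>. real (eta n x \<omega>) ^ 6)"
    and "\<exists>K. \<forall>n x. (\<integral>\<omega>. real (eta n x \<omega>) ^ 6 \<partial>M) \<le> K"
  shows "\<exists>C::real. \<forall>n::nat. \<forall>s t k. 0 \<le> s \<and> s \<le> t \<and> 1 \<le> k \<and> k \<le> (6::nat) \<longrightarrow>
           (\<Sum>\<^sub>\<infinity>m::int. \<integral>\<^sup>+\<omega>. ennreal (\<bar>Gm M (eta n m) (X n m) n ybar (\<Sum>\<^sub>\<infinity>x. real_of_int x * p x) s t \<omega>\<bar> ^ k) \<partial>M)
             \<le> ennreal (C * (sqrt (real n * (t - s)) + 1))"
proof -
  note M = assms(1)
  interpret prob_space M by (rule M)
  have p0: "\<And>x. 0 \<le> p x" and p1: "(p has_sum 1) UNIV" using assms(2) by (auto simp: prob_kernel_def)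
  interpret kern p \<delta> using p0 p1 assms(3) assms(4) by unfold_locales auto
  obtain K where K: "\<And>n x. (\<integral>\<omega>. real (eta n x \<omega>) ^ 6 \<partial>M) \<le> K" using assms(9) by blast
  define c where "c = 64 * ((1 + K) + (1 + K)^6)"
  have K0: "0 \<le> K"
  proof -
    have "0 \<le> (\<integral>\<omega>. real (eta 0 0 \<omega>) ^ 6 \<partial>M)" by (intro integral_nonneg_AE) auto
    then show ?thesis using K[of 0 0] by linarith
  qed
  have c0: "0 \<le> c" using K0 by (simp add: c_def)
  show ?thesis unfolding bb_def[symmetric]
  proof (intro exI[of _ "c * (s2 + 2)"] allI impI)
    fix n :: nat and s t :: real and k :: nat
    assume H: "0 \<le> s \<and> s \<le> t \<and> 1 \<le> k \<and> k \<le> 6"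
    define S where "S = real n * s"
    define T where "T = real n * t"
    define u where "u = T - S"
    have S0: "0 \<le> S" using H by (simp add: S_def)
    have ST: "S \<le> T" using H by (simp add: S_def T_def mult_left_mono)
    have u0: "0 \<le> u" using ST by (simp add: u_def)
    define a1 where "a1 = \<lfloor>real n * ybar\<rfloor> + \<lfloor>real n * bb * s\<rfloor>"
    define a2 where "a2 = \<lfloor>real n * ybar\<rfloor> + \<lfloor>real n * bb * t\<rfloor>"
    define R where "R m = (\<integral>\<^sup>+i. \<integral>\<^sup>+d. ennreal (ctrw_kernel p S i * ctrw_kernel p u d) * chi a1 a2 (m + i) (m + i + d)
        \<partial>count_space UNIV \<partial>count_space UNIV)" for m
    have per_m: "(\<integral>\<^sup>+\<omega>. ennreal (\<bar>Gm M (eta n m) (X n m) n ybar bb s t \<omega>\<bar> ^ k) \<partial>M) \<le> ennreal c * R m" for m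
    proof -
      have Wj: "ctrw M p m (X n m j)" if "1 \<le> j" for j using assms(5) that by blast
      have evU: "evA M (X n m j) n ybar bb s t \<union> evB M (X n m j) n ybar bb s t =
          {\<omega> \<in> space M. (a1 < X n m j \<omega> S \<and> X n m j \<omega> T \<le> a2) \<or> (X n m j \<omega> S \<le> a1 \<and> a2 < X n m j \<omega> T)}" for j
        by (auto simp: evA_def evB_def a1_def a2_def S_def T_def)
      have Em: "eta n m \<in> M \<rightarrow>\<^sub>M count_space UNIV" using assms(6) by blast
      have As: "evA M (X n m j) n ybar bb s t \<in> sets M" if j: "1 \<le> j" for j
      proof -
        have [measurable]: "(\<lambda>\<omega>. X n m j \<omega> t') \<in> M \<rightarrow>\<^sub>M count_space UNIV" for t' using ctrw_meas[OF Wj[OF j]] .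
        show ?thesis unfolding evA_def by measurable
      qed
      have Bs: "evB M (X n m j) n ybar bb s t \<in> sets M" if j: "1 \<le> j" for j
      proof -
        have [measurable]: "(\<lambda>\<omega>. X n m j \<omega> t') \<in> M \<rightarrow>\<^sub>M count_space UNIV" for t' using ctrw_meas[OF Wj[OF j]] .
        show ?thesis unfolding evB_def by measurable
      qed
      have CR: "emeasure M (evA M (X n m j) n ybar bb s t \<union> evB M (X n m j) n ybar bb s t) \<le> R m" if j: "1 \<le> j" for j
        unfolding evU R_def using walk_law[OF M Wj[OF j] S0 ST, of a1 a2] by (simp add: u_def)
      have ind: "emeasure M ({\<omega>\<in>space M. eta n m \<omega> = v} \<inter> (evA M (X n m j) n ybar bb s t \<union> evB M (X n m j) n ybar bb s t))
        = emeasure M {\<omega>\<in>space M. eta n m \<omega> = v} * emeasure M (evA M (X n m j) n ybar bb s t \<union> evB M (X n m j) n ybar bb s t)"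
        if j: "1 \<le> j" for j v
      proof -
        let ?P = "\<Pi>\<^sub>M u\<in>(UNIV::real set). count_space (UNIV::int set)"
        let ?Cs = "{f \<in> space ?P. (a1 < f S \<and> f T \<le> a2) \<or> (f S \<le> a1 \<and> a2 < f T)}"
        have Csets: "?Cs \<in> sets ?P" by measurable
        have Xm: "X n m j \<in> M \<rightarrow>\<^sub>M ?P" using Wj[OF j] by (simp add: ctrw_def)
        have pre: "X n m j -` ?Cs \<inter> space M = evA M (X n m j) n ybar bb s t \<union> evB M (X n m j) n ybar bb s t"
          unfolding evU using measurable_space[OF Xm] by auto
        have Es: "{\<omega>\<in>space M. eta n m \<omega> = v} = eta n m -` {v} \<inter> space M" by auto
        define A where "A i = (if i = Inl m then eta n m -` {v} \<inter> space M else X n m j -` ?Cs \<inter> space M)" for i :: "int + int \<times> nat"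
        have "measure M (\<Inter>i\<in>{Inl m, Inr (m, j)}. A i) = (\<Prod>i\<in>{Inl m, Inr (m, j)}. measure M (A i))"
        proof (rule indep_setsD[OF assms(7)[rule_format, of n]])
          show "{Inl m, Inr (m, j)} \<subseteq> range Inl \<union> {Inr (m, j) |m j. 1 \<le> j}" using j by auto
          show "\<forall>i\<in>{Inl m, Inr (m, j)}. A i \<in> (case i of Inl m \<Rightarrow> {eta n m -` A \<inter> space M |A. A \<in> sets (count_space UNIV)}
                 | Inr (m, j) \<Rightarrow> {X n m j -` A \<inter> space M |A. A \<in> sets ?P})"
          proof -
            have a1': "A (Inl m) = eta n m -` {v} \<inter> space M" by (simp add: A_def)
            have a2': "A (Inr (m, j)) = X n m j -` ?Cs \<inter> space M" by (simp only: A_def) simp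
            have "A (Inl m) \<in> {eta n m -` A \<inter> space M |A. A \<in> sets (count_space UNIV)}"
              unfolding a1' by (intro CollectI exI[of _ "{v}"] conjI) auto
            moreover have "A (Inr (m, j)) \<in> {X n m j -` A \<inter> space M |A. A \<in> sets ?P}"
              unfolding a2' by (intro CollectI exI[of _ ?Cs] conjI refl Csets)
            ultimately show ?thesis by simp
          qed
        qed auto
        moreover have "(\<Inter>i\<in>{Inl m, Inr (m, j)}. A i) = A (Inl m) \<inter> A (Inr (m, j))" by simp
        moreover have "A (Inl m) \<inter> A (Inr (m, j)) = {\<omega>\<in>space M. eta n m \<omega> = v} \<inter> (evA M (X n m j) n ybar bb s t \<union> evB M (X n m j) n ybar bb s t)"
          unfolding Es pre[symmetric] by (simp add: A_def)
        moreover have "(\<Prod>i\<in>{Inl m, Inr (m, j)}. measure M (A i)) = measure M (A (Inl m)) * measure M (A (Inr (m, j)))" by simp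
        moreover have "measure M (A (Inl m)) * measure M (A (Inr (m, j))) = measure M {\<omega>\<in>space M. eta n m \<omega> = v} * measure M (evA M (X n m j) n ybar bb s t \<union> evB M (X n m j) n ybar bb s t)"
          unfolding Es pre[symmetric] by (simp add: A_def)
        ultimately show ?thesis by (simp add: emeasure_eq_measure ennreal_mult[symmetric])
      qed
      show ?thesis unfolding c_def
        by (rule G_bound[OF M Em As Bs CR ind]) (use assms(8) K H in auto)
    qed
    have hD: "\<bar>real_of_int (a2 - a1) - u * bb\<bar> \<le> 1"
    proof -
      have "real_of_int (a2 - a1) = real_of_int \<lfloor>real n * bb * t\<rfloor> - real_of_int \<lfloor>real n * bb * s\<rfloor>"
        by (simp add: a1_def a2_def)
      moreover have "u * bb = real n * bb * t - real n * bb * s" by (simp add: u_def S_def T_def algebra_simps)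
      moreover have "real n * bb * t - 1 < real_of_int \<lfloor>real n * bb * t\<rfloor>" "real_of_int \<lfloor>real n * bb * t\<rfloor> \<le> real n * bb * t"
        by linarith+
      moreover have "real n * bb * s - 1 < real_of_int \<lfloor>real n * bb * s\<rfloor>" "real_of_int \<lfloor>real n * bb * s\<rfloor> \<le> real n * bb * s"
        by linarith+
      ultimately show ?thesis by linarith
    qed
    have "(\<Sum>\<^sub>\<infinity>m::int. \<integral>\<^sup>+\<omega>. ennreal (\<bar>Gm M (eta n m) (X n m) n ybar bb s t \<omega>\<bar> ^ k) \<partial>M)
        = (\<integral>\<^sup>+m. (\<integral>\<^sup>+\<omega>. ennreal (\<bar>Gm M (eta n m) (X n m) n ybar bb s t \<omega>\<bar> ^ k) \<partial>M) \<partial>count_space UNIV)"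
      by (rule infsum_ennreal_int)
    also have "\<dots> \<le> (\<integral>\<^sup>+m. ennreal c * R m \<partial>count_space UNIV)"
      by (intro nn_integral_mono per_m)
    also have "\<dots> = ennreal c * (\<integral>\<^sup>+m. R m \<partial>count_space UNIV)"
      by (simp add: nn_integral_cmult)
    also have "\<dots> \<le> ennreal c * ennreal ((s2 + 2) * (sqrt u + 1))"
      unfolding R_def by (intro mult_left_mono sum_R S0 u0 hD) auto
    also have "\<dots> = ennreal (c * (s2 + 2) * (sqrt (real n * (t - s)) + 1))"
      using c0 s2_nonneg u0 by (simp add: ennreal_mult[symmetric] u_def S_def T_def right_diff_distrib mult.assoc)
    finally show "(\<Sum>\<^sub>\<infinity>m::int. \<integral>\<^sup>+\<omega>. ennreal (\<bar>Gm M (eta n m) (X n m) n ybar bb s t \<omega>\<bar> ^ k) \<partial>M)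
        \<le> ennreal (c * (s2 + 2) * (sqrt (real n * (t - s)) + 1))" .
  qed
qed

end
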